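(* Let $p$ and $q$ be distinct primes. Suppose $G$ is a finite non-abelian semi-direct product of a normal abelian Sylow $p$-subgroup $P$ by a cyclic $q$-complement $Q$. Suppose that $P$ is a direct product of cyclic groups of order $p^m$ for some positive integer $m$, that $|G:\mathbf{C}_G(P)|=q$, and that $Q$ acts (by conjugation) non-trivially and irreducibly on $P/P^p$. Then $G$ is exponent-critical.
   Context: A finite group $G$ is exponent-critical if $\exp(G)$ is not the least common multiple of the exponents of the proper non-abelian subgroups of $G$. $P^p$ denotes the subgroup of $P$ generated by the $p$-th powers. *)

theory Defs
  imports "HOL-Algebra.Algebra"
begin

definition group_exponent :: "('a, 'b) monoid_scheme \<Rightarrow> nat" where
  "group_exponent G = Lcm (group.ord G ` carrier G)"

definition exponent_critical :: "('a, 'b) monoid_scheme \<Rightarrow> bool" where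
  "exponent_critical G \<longleftrightarrow>
     group_exponent G \<noteq>
     Lcm {group_exponent (subgroup_generated G H) | H.
            subgroup H G \<and> H \<noteq> carrier G \<and> \<not> comm_group (subgroup_generated G H)}"

definition centralizer :: "('a, 'b) monoid_scheme \<Rightarrow> 'a set \<Rightarrow> 'a set" where
  "centralizer G S = {g \<in> carrier G. \<forall>x\<in>S. g \<otimes>\<^bsub>G\<^esub> x = x \<otimes>\<^bsub>G\<^esub> g}"

definition power_subgroup :: "('a, 'b) monoid_scheme \<Rightarrow> 'a set \<Rightarrow> nat \<Rightarrow> 'a set" where
  "power_subgroup G P p = generate G {x [^]\<^bsub>G\<^esub> p | x. x \<in> P}"

definition conj_invariant :: "('a, 'b) monoid_scheme \<Rightarrow> 'a set \<Rightarrow> 'a set \<Rightarrow> bool" where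
  "conj_invariant G Q H \<longleftrightarrow>
     (\<forall>g\<in>Q. \<forall>h\<in>H. g \<otimes>\<^bsub>G\<^esub> h \<otimes>\<^bsub>G\<^esub> inv\<^bsub>G\<^esub> g \<in> H)"

definition acts_nontrivially_mod_power ::
  "('a, 'b) monoid_scheme \<Rightarrow> 'a set \<Rightarrow> 'a set \<Rightarrow> nat \<Rightarrow> bool" where
  "acts_nontrivially_mod_power G Q P p \<longleftrightarrow>
     (\<exists>g\<in>Q. \<exists>x\<in>P.
        g \<otimes>\<^bsub>G\<^esub> x \<otimes>\<^bsub>G\<^esub> inv\<^bsub>G\<^esub> g \<otimes>\<^bsub>G\<^esub> inv\<^bsub>G\<^esub> x
          \<notin> power_subgroup G P p)"

text \<open>Q acts irreducibly on P/P^p: the Q-invariant subgroups of P/P^p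
  (i.e. Q-invariant subgroups H with P^p \<subseteq> H \<subseteq> P) are only the trivial
  one and the whole quotient.\<close>
definition acts_irreducibly_mod_power ::
  "('a, 'b) monoid_scheme \<Rightarrow> 'a set \<Rightarrow> 'a set \<Rightarrow> nat \<Rightarrow> bool" where
  "acts_irreducibly_mod_power G Q P p \<longleftrightarrow>
     power_subgroup G P p \<noteq> P \<and>
     (\<forall>H. subgroup H G \<and> power_subgroup G P p \<subseteq> H \<and> H \<subseteq> P \<and> conj_invariant G Q H
          \<longrightarrow> H = power_subgroup G P p \<or> H = P)"

definition homocyclic :: "('a, 'b) monoid_scheme \<Rightarrow> 'a set \<Rightarrow> nat \<Rightarrow> nat \<Rightarrow> bool" where
  "homocyclic G P p m \<longleftrightarrow>
     (\<exists>n::nat. subgroup_generated G P \<cong>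
                product_group {..<n} (\<lambda>_. integer_mod_group (p ^ m)))"

end

theory Submission
  imports Defs
begin


context group begin

lemma inv_cancel_l [simp]: "x \<in> carrier G \<Longrightarrow> y \<in> carrier G \<Longrightarrow> inv x \<otimes> (x \<otimes> y) = y"
  by (simp add: m_assoc[symmetric])

lemma inv_cancel_r [simp]: "x \<in> carrier G \<Longrightarrow> y \<in> carrier G \<Longrightarrow> x \<otimes> (inv x \<otimes> y) = y"
  by (simp add: m_assoc[symmetric])

lemma sub_pow_closed:
  assumes H: "subgroup H G" and x: "x \<in> H"
  shows "x [^] (n::nat) \<in> H"
proof (induction n)
  case 0 show ?case using subgroup.one_closed[OF H] by simp
next
  case (Suc n)
  show ?case unfolding nat_pow_Suc by (rule subgroup.m_closed[OF H Suc x])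
qed

lemma conj_mult:
  "g1 \<in> carrier G \<Longrightarrow> g2 \<in> carrier G \<Longrightarrow> x \<in> carrier G \<Longrightarrow>
   (g1 \<otimes> g2) \<otimes> x \<otimes> inv (g1 \<otimes> g2) = g1 \<otimes> (g2 \<otimes> x \<otimes> inv g2) \<otimes> inv g1"
  by (simp add: m_assoc inv_mult_group)

lemma pow_coset:
  assumes N: "P \<lhd> G" and a: "a \<in> P" and b: "b \<in> carrier G"
  shows "\<exists>a'\<in>P. (a \<otimes> b) [^] (n::nat) = a' \<otimes> b [^] n"
proof (induction n)
  case 0
  have "\<one> \<in> P" using N normal_imp_subgroup subgroup.one_closed by blast
  then show ?case using b by (intro bexI[of _ "\<one>"]) simp_all
next
  case (Suc n)
  have sP: "subgroup P G" using N normal_imp_subgroup by blast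
  then have aG: "a \<in> carrier G" using a subgroup.subset by blast
  from Suc obtain a' where a': "a' \<in> P" "(a \<otimes> b) [^] n = a' \<otimes> b [^] n" by blast
  have a'G: "a' \<in> carrier G" using a' sP subgroup.subset by blast
  have c: "b [^] n \<otimes> a \<otimes> inv (b [^] n) \<in> P" using normal.inv_op_closed2[OF N nat_pow_closed[OF b] a] .
  have "(a \<otimes> b) [^] Suc n = a' \<otimes> b [^] n \<otimes> (a \<otimes> b)" unfolding nat_pow_Suc a'(2) by (rule refl)
  also have "\<dots> = (a' \<otimes> (b [^] n \<otimes> a \<otimes> inv (b [^] n))) \<otimes> (b [^] n \<otimes> b)"
    using aG a'G b by (simp add: m_assoc)
  also have "\<dots> = (a' \<otimes> (b [^] n \<otimes> a \<otimes> inv (b [^] n))) \<otimes> b [^] Suc n"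
    by simp
  finally have e: "(a \<otimes> b) [^] Suc n = (a' \<otimes> (b [^] n \<otimes> a \<otimes> inv (b [^] n))) \<otimes> b [^] Suc n" .
  have "a' \<otimes> (b [^] n \<otimes> a \<otimes> inv (b [^] n)) \<in> P" by (rule subgroup.m_closed[OF sP a'(1) c])
  then show ?case using e by blast
qed

lemma pow_one_gcd:
  assumes "x \<in> carrier G" "x [^] (a::nat) = \<one>" "x [^] (b::nat) = \<one>"
  shows "x [^] gcd a b = \<one>"
  using assms by (simp add: pow_eq_id)

lemma gen_pow:
  assumes g: "g \<in> carrier G" and o: "ord g = q ^ k" and q: "Factorial_Ring.prime q" and e: "\<not> q dvd e"
  shows "\<exists>e'. (g [^] e) [^] (e'::nat) = g"
proof -
  have e0: "e \<noteq> 0" using e by (metis dvd_0_right)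
  have "coprime e (q ^ k)" using prime_imp_coprime[OF q e]
    by (simp add: coprime_commute)
  then have gc: "gcd e (q^k) = 1" by simp
  obtain x y where xy: "e * x = q ^ k * y + 1" using bezout_nat[OF e0, of "q^k"] gc by auto
  have "(g [^] e) [^] x = g [^] (ord g * y + 1)" using g xy o by (simp add: nat_pow_pow)
  also have "\<dots> = (g [^] ord g) [^] y \<otimes> g" using g by (simp add: nat_pow_mult nat_pow_pow del: pow_ord_eq_1)
  also have "\<dots> = g" using g by (simp add: nat_pow_one)
  finally show ?thesis by blast
qed

end

lemma pow_product_group:
  assumes "f \<in> carrier (product_group I H)" "\<And>i. i \<in> I \<Longrightarrow> group (H i)"
  shows "f [^]\<^bsub>product_group I H\<^esub> (n::nat) = (\<lambda>i\<in>I. f i [^]\<^bsub>H i\<^esub> n)"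
proof (induction n)
  case 0 then show ?case by simp
next
  case (Suc n)
  then show ?case using assms by (auto intro!: restrict_ext)
qed



context group begin

lemma PS_pow:
  assumes P: "subgroup P G" and comm: "\<And>x y. x \<in> P \<Longrightarrow> y \<in> P \<Longrightarrow> x \<otimes> y = y \<otimes> x"
  shows "power_subgroup G P p \<subseteq> {y [^] p | y. y \<in> P}"
proof
  fix z assume "z \<in> power_subgroup G P p"
  then show "z \<in> {y [^] p | y. y \<in> P}"
    unfolding power_subgroup_def
  proof (induction z rule: generate.induct)
    case one
    have "\<one> = \<one> [^] p" by simp
    then show ?case using subgroup.one_closed[OF P] by blast
  next
    case (incl h)
    then show ?case by blast
  next
    case (inv h)
    then obtain y where y: "y \<in> P" "h = y [^] p" by blast
    have yG: "y \<in> carrier G" using y(1) subgroup.subset[OF P] by blast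
    have "inv h = (inv y) [^] p" using y yG by (simp add: nat_pow_inv)
    moreover have "inv y \<in> P" by (rule subgroup.m_inv_closed[OF P y(1)])
    ultimately show ?case by blast
  next
    case (eng h1 h2)
    then obtain y1 y2 where y: "y1 \<in> P" "h1 = y1 [^] p" "y2 \<in> P" "h2 = y2 [^] p" by blast
    have yG: "y1 \<in> carrier G" "y2 \<in> carrier G" using y(1,3) subgroup.subset[OF P] by blast+
    have "h1 \<otimes> h2 = (y1 \<otimes> y2) [^] p" using pow_mult_distrib[OF comm[OF y(1) y(3)] yG(1) yG(2), of p] y(2,4) by simp
    moreover have "y1 \<otimes> y2 \<in> P" by (rule subgroup.m_closed[OF P y(1) y(3)])
    ultimately show ?case by blast
  qed
qed

lemma PS_sub:
  assumes P: "subgroup P G" and comm: "\<And>x y. x \<in> P \<Longrightarrow> y \<in> P \<Longrightarrow> x \<otimes> y = y \<otimes> x"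
  shows "power_subgroup G P p \<subseteq> P"
proof -
  have "\<And>y. y \<in> P \<Longrightarrow> y [^] p \<in> P"
    using P by (rule sub_pow_closed)
  then show ?thesis using PS_pow[OF assms] by blast
qed

end

lemma homocyclic_facts:
  assumes G: "group G" and P: "subgroup P G" and hc: "homocyclic G P p m"
    and p: "Factorial_Ring.prime p" and m: "m > 0"
    and comm: "\<And>x y. x \<in> P \<Longrightarrow> y \<in> P \<Longrightarrow> x \<otimes>\<^bsub>G\<^esub> y = y \<otimes>\<^bsub>G\<^esub> x"
    and ne: "power_subgroup G P p \<noteq> P"
  shows "(\<forall>y\<in>P. y [^]\<^bsub>G\<^esub> (p^m) = \<one>\<^bsub>G\<^esub>) \<and> (\<exists>x\<in>P. x [^]\<^bsub>G\<^esub> (p^(m-1)) \<noteq> \<one>\<^bsub>G\<^esub>)"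
proof -
  interpret G: group G by fact
  define N where "N = p ^ m"
  have N2: "N \<ge> 2" unfolding N_def using p m
    by (metis One_nat_def Suc_1 Suc_leI gr0I nat_less_le one_less_power power_0 power_one_right prime_gt_1_nat less_imp_le_nat)
  let ?A = "subgroup_generated G P"
  obtain n :: nat where "?A \<cong> product_group {..<n} (\<lambda>_. integer_mod_group N)"
    using hc unfolding homocyclic_def N_def[symmetric] by blast
  then obtain \<phi> where phi: "\<phi> \<in> iso ?A (product_group {..<n} (\<lambda>_. integer_mod_group N))"
    unfolding is_iso_def by blast
  define Pr where "Pr = product_group {..<n} (\<lambda>_. integer_mod_group N)"
  have phi': "\<phi> \<in> iso ?A Pr" using phi Pr_def by simp
  have cA: "carrier ?A = P" using subgroup.carrier_subgroup_generated_subgroup[OF P] .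
  have gA: "group ?A" by simp
  have gPr: "group Pr" unfolding Pr_def by simp
  have isoc: "\<phi> \<in> hom ?A Pr \<and> \<phi> ` (carrier ?A) = carrier Pr \<and> inj_on \<phi> (carrier ?A)"
    using iso_iff[THEN iffD1, OF phi'] .
  have hom: "\<phi> \<in> hom ?A Pr" using isoc by (rule conjunct1)
  have inj: "inj_on \<phi> P" using isoc cA by simp
  have surj: "\<phi> ` P = carrier Pr" using isoc cA by simp
  have powA: "\<And>y k. y [^]\<^bsub>?A\<^esub> (k::nat) = y [^]\<^bsub>G\<^esub> k" by (simp add: pow_subgroup_generated)
  have one: "\<phi> \<one>\<^bsub>G\<^esub> = \<one>\<^bsub>Pr\<^esub>"
    using hom_one[OF hom gA gPr] by simp
  have phipow: "\<phi> (y [^]\<^bsub>G\<^esub> k) = (\<lambda>i\<in>{..<n}. (int k * \<phi> y i) mod int N)" if "y \<in> P" for y and k :: nat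
  proof -
    have "\<phi> (y [^]\<^bsub>G\<^esub> k) = \<phi> y [^]\<^bsub>Pr\<^esub> k"
      using hom_nat_pow[OF hom _ gA gPr, of y k] that cA powA by simp
    also have "\<dots> = (\<lambda>i\<in>{..<n}. (int k * \<phi> y i) mod int N)"
      using pow_product_group[of "\<phi> y" "{..<n}" "\<lambda>_. integer_mod_group N" k] that surj
      unfolding Pr_def by auto
    finally show ?thesis .
  qed
  have part1: "\<forall>y\<in>P. y [^]\<^bsub>G\<^esub> N = \<one>\<^bsub>G\<^esub>"
  proof
    fix y assume y: "y \<in> P"
    have "\<phi> (y [^]\<^bsub>G\<^esub> N) = \<one>\<^bsub>Pr\<^esub>" using phipow[OF y, of N] unfolding Pr_def by simp
    then have "\<phi> (y [^]\<^bsub>G\<^esub> N) = \<phi> \<one>\<^bsub>G\<^esub>" using one by simp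
    moreover have "y [^]\<^bsub>G\<^esub> N \<in> P" using G.sub_pow_closed[OF P y] .
    moreover have "\<one>\<^bsub>G\<^esub> \<in> P" using subgroup.one_closed[OF P] by simp
    ultimately show "y [^]\<^bsub>G\<^esub> N = \<one>\<^bsub>G\<^esub>" using inj inj_on_def by metis
  qed
  have n0: "n > 0"
  proof (rule ccontr)
    assume "\<not> n > 0"
    then have "n = 0" by simp
    then have "carrier Pr = {\<lambda>_. undefined}" unfolding Pr_def by simp
    then have "card P = 1" using inj surj card_image by fastforce
    moreover have "\<one>\<^bsub>G\<^esub> \<in> P" using subgroup.one_closed[OF P] by simp
    ultimately have P1: "P = {\<one>\<^bsub>G\<^esub>}" using card_1_singletonE by (metis singletonD)
    have "power_subgroup G P p \<subseteq> P" using G.PS_sub[OF P comm] by blast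
    moreover have "\<one>\<^bsub>G\<^esub> \<in> power_subgroup G P p" unfolding power_subgroup_def by (rule generate.one)
    ultimately show False using ne P1 by blast
  qed
  define e where "e = (\<lambda>i\<in>{..<n}. (1::int))"
  have "e \<in> carrier Pr" unfolding e_def Pr_def using N2 by (simp add: carrier_integer_mod_group)
  then have "e \<in> \<phi> ` P" using surj by simp
  then obtain x where x0: "x \<in> P" "e = \<phi> x" by (rule imageE)
  then have x: "x \<in> P" "\<phi> x = e" by simp_all
  have "x [^]\<^bsub>G\<^esub> (p^(m-1)) \<noteq> \<one>\<^bsub>G\<^esub>"
  proof
    assume "x [^]\<^bsub>G\<^esub> (p^(m-1)) = \<one>\<^bsub>G\<^esub>"
    then have "\<phi> (x [^]\<^bsub>G\<^esub> (p^(m-1))) = \<one>\<^bsub>Pr\<^esub>" using one by simp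
    then have "(\<lambda>i\<in>{..<n}. (int (p^(m-1)) * \<phi> x i) mod int N) = (\<lambda>i\<in>{..<n}. 0)"
      using phipow[OF x(1)] unfolding Pr_def by simp
    then have "(\<lambda>i\<in>{..<n}. (int (p^(m-1)) * \<phi> x i) mod int N) 0 = (\<lambda>i\<in>{..<n}. (0::int)) 0"
      by (rule fun_cong)
    then have "(int (p^(m-1)) * \<phi> x 0) mod int N = 0" using n0 by simp
    then have "int (p^(m-1)) mod int N = 0" using x(2) n0 unfolding e_def by simp
    then have "int N dvd int (p^(m-1))" by (simp add: dvd_eq_mod_eq_0)
    then have "p^m dvd p^(m-1)" unfolding N_def by (simp only: int_dvd_int_iff)
    moreover have "p^(m-1) < p^m" using m prime_gt_1_nat[OF p]
      by (intro power_strict_increasing) auto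
    moreover have "p^(m-1) > 0" using prime_gt_0_nat[OF p] by simp
    ultimately show False
      using nat_dvd_not_less by blast
  qed
  then show ?thesis using part1 x(1) N_def by blast
qed



context group begin

lemma cent_sub: "P \<subseteq> carrier G \<Longrightarrow> subgroup (centralizer G P) G"
  unfolding centralizer_def
proof (rule subgroupI)
  assume P: "P \<subseteq> carrier G"
  show "{g \<in> carrier G. \<forall>x\<in>P. g \<otimes> x = x \<otimes> g} \<subseteq> carrier G" by blast
  show "{g \<in> carrier G. \<forall>x\<in>P. g \<otimes> x = x \<otimes> g} \<noteq> {}"
  proof -
    have "\<one> \<in> {g \<in> carrier G. \<forall>x\<in>P. g \<otimes> x = x \<otimes> g}" using P by auto
    then show ?thesis by blast
  qed
  show "inv a \<in> {g \<in> carrier G. \<forall>x\<in>P. g \<otimes> x = x \<otimes> g}" if "a \<in> {g \<in> carrier G. \<forall>x\<in>P. g \<otimes> x = x \<otimes> g}" for a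
  proof -
    have a: "a \<in> carrier G" "\<forall>x\<in>P. a \<otimes> x = x \<otimes> a" using that by auto
    have "inv a \<otimes> x = x \<otimes> inv a" if x: "x \<in> P" for x
    proof -
      have xG: "x \<in> carrier G" using x P by blast
      have "inv a \<otimes> x = inv a \<otimes> (x \<otimes> a) \<otimes> inv a" using a xG by (simp add: m_assoc)
      also have "\<dots> = inv a \<otimes> (a \<otimes> x) \<otimes> inv a" using a x by simp
      also have "\<dots> = x \<otimes> inv a" using a xG by (simp add: m_assoc[symmetric])
      finally show ?thesis .
    qed
    then show ?thesis using a by simp
  qed
  show "a \<otimes> b \<in> {g \<in> carrier G. \<forall>x\<in>P. g \<otimes> x = x \<otimes> g}"
    if "a \<in> {g \<in> carrier G. \<forall>x\<in>P. g \<otimes> x = x \<otimes> g}" "b \<in> {g \<in> carrier G. \<forall>x\<in>P. g \<otimes> x = x \<otimes> g}" for a b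
  proof -
    have ab: "a \<in> carrier G" "b \<in> carrier G" "\<forall>x\<in>P. a \<otimes> x = x \<otimes> a" "\<forall>x\<in>P. b \<otimes> x = x \<otimes> b"
      using that by auto
    have "a \<otimes> b \<otimes> x = x \<otimes> (a \<otimes> b)" if x: "x \<in> P" for x
    proof -
      have xG: "x \<in> carrier G" using x P by blast
      have "a \<otimes> b \<otimes> x = a \<otimes> (x \<otimes> b)" using ab x xG by (simp add: m_assoc)
      also have "\<dots> = (a \<otimes> x) \<otimes> b" using ab xG by (simp add: m_assoc)
      also have "\<dots> = x \<otimes> (a \<otimes> b)" using ab x xG by (simp add: m_assoc)
      finally show ?thesis .
    qed
    then show ?thesis using ab by simp
  qed
qed

lemma cent_conj:
  assumes N: "P \<lhd> G" and c: "c \<in> centralizer G P" and y: "y \<in> carrier G"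
  shows "inv y \<otimes> c \<otimes> y \<in> centralizer G P"
proof -
  have cG: "c \<in> carrier G" and cc: "\<And>x. x \<in> P \<Longrightarrow> c \<otimes> x = x \<otimes> c" using c unfolding centralizer_def by auto
  have PG: "P \<subseteq> carrier G" using subgroup.subset[OF normal_imp_subgroup[OF N]] .
  have "inv y \<otimes> c \<otimes> y \<otimes> x = x \<otimes> (inv y \<otimes> c \<otimes> y)" if x: "x \<in> P" for x
  proof -
    have xG: "x \<in> carrier G" using x PG by blast
    have z: "y \<otimes> x \<otimes> inv y \<in> P" using normal.inv_op_closed2[OF N y x] .
    then have zG: "y \<otimes> x \<otimes> inv y \<in> carrier G" using PG by blast
    have "inv y \<otimes> c \<otimes> y \<otimes> x = inv y \<otimes> (c \<otimes> (y \<otimes> x \<otimes> inv y)) \<otimes> y"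
      using cG y xG by (simp add: m_assoc)
    also have "\<dots> = inv y \<otimes> ((y \<otimes> x \<otimes> inv y) \<otimes> c) \<otimes> y" using cc[OF z] by simp
    also have "\<dots> = x \<otimes> (inv y \<otimes> c \<otimes> y)"
      using cG y xG by (simp add: m_assoc[symmetric])
    finally show ?thesis .
  qed
  then show ?thesis using cG y unfolding centralizer_def by simp
qed

lemma P_sub_cent:
  assumes "P \<subseteq> carrier G" "\<And>x y. x \<in> P \<Longrightarrow> y \<in> P \<Longrightarrow> x \<otimes> y = y \<otimes> x"
  shows "P \<subseteq> centralizer G P"
  using assms unfolding centralizer_def by blast

lemma gen_decomp:
  assumes N: "P \<lhd> G" and fin: "finite (carrier G)" and b: "b \<in> carrier G"
    and g: "g \<in> generate G (insert b (centralizer G P))"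
  shows "\<exists>j c. c \<in> centralizer G P \<and> g = b [^] (j::nat) \<otimes> c"
proof -
  let ?C = "centralizer G P"
  have PG: "P \<subseteq> carrier G" using subgroup.subset[OF normal_imp_subgroup[OF N]] .
  have sC: "subgroup ?C G" using cent_sub[OF PG] .
  have CG: "?C \<subseteq> carrier G" using subgroup.subset[OF sC] .
  have oneC: "\<one> \<in> ?C" using subgroup.one_closed[OF sC] .
  have binv: "inv b = b [^] (ord b - 1)"
  proof -
    have o: "ord b \<ge> 1" using ord_ge_1[OF fin b] .
    have "b [^] (ord b - 1) \<otimes> b = b [^] (Suc (ord b - 1))" by (simp only: nat_pow_Suc)
    also have "Suc (ord b - 1) = ord b" using o by simp
    finally have "b [^] (ord b - 1) \<otimes> b = \<one>" using b by simp
    then show ?thesis using inv_equality[of "b [^] (ord b - 1)" b] b by simp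
  qed
  show ?thesis
    using g
  proof (induction g rule: generate.induct)
    case one
    have "\<one> = b [^] (0::nat) \<otimes> \<one>" by simp
    then show ?case using oneC by blast
  next
    case (incl h)
    then show ?case
    proof
      assume "h = b"
      then have "h = b [^] (1::nat) \<otimes> \<one>" using b by simp
      then show ?thesis using oneC by blast
    next
      assume hC: "h \<in> ?C"
      then have "h = b [^] (0::nat) \<otimes> h" using CG by auto
      then show ?thesis using hC by blast
    qed
  next
    case (inv h)
    then show ?case
    proof
      assume "h = b"
      then have "inv h = b [^] (ord b - 1) \<otimes> \<one>" using b binv by simp
      then show ?thesis using oneC by blast
    next
      assume hC: "h \<in> ?C"
      have iC: "inv h \<in> ?C" using subgroup.m_inv_closed[OF sC hC] .
      then have "inv h = b [^] (0::nat) \<otimes> inv h" using CG by auto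
      then show ?thesis using iC by blast
    qed
  next
    case (eng h1 h2)
    then obtain i c1 j c2 where h: "c1 \<in> ?C" "h1 = b [^] (i::nat) \<otimes> c1" "c2 \<in> ?C" "h2 = b [^] (j::nat) \<otimes> c2"
      by blast
    have cG: "c1 \<in> carrier G" "c2 \<in> carrier G" using h(1,3) CG by auto
    have c': "inv (b [^] j) \<otimes> c1 \<otimes> b [^] j \<in> ?C" using cent_conj[OF N h(1) nat_pow_closed[OF b]] .
    have "h1 \<otimes> h2 = b [^] i \<otimes> (b [^] j \<otimes> (inv (b [^] j) \<otimes> (c1 \<otimes> (b [^] j \<otimes> c2))))"
      using h(2,4) cG b by (simp add: m_assoc)
    also have "\<dots> = b [^] (i + j) \<otimes> ((inv (b [^] j) \<otimes> c1 \<otimes> b [^] j) \<otimes> c2)"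
      using cG b by (simp add: m_assoc nat_pow_mult[symmetric])
    finally have e: "h1 \<otimes> h2 = b [^] (i + j) \<otimes> ((inv (b [^] j) \<otimes> c1 \<otimes> b [^] j) \<otimes> c2)" .
    have "(inv (b [^] j) \<otimes> c1 \<otimes> b [^] j) \<otimes> c2 \<in> ?C" using subgroup.m_closed[OF sC c' h(3)] .
    then show ?case using e by blast
  qed
qed

lemma index_prime_gen:
  assumes fin: "finite (carrier G)" and sC: "subgroup C G" and q: "card (rcosets C) = q"
    and qp: "Factorial_Ring.prime q" and b: "b \<in> carrier G" "b \<notin> C"
  shows "generate G (insert b C) = carrier G"
proof -
  let ?X = "generate G (insert b C)"
  have ins: "insert b C \<subseteq> carrier G" using b subgroup.subset[OF sC] by blast
  have sX: "subgroup ?X G" using generate_is_subgroup[OF ins] .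
  have CX: "C \<subseteq> ?X" using generate.incl[of _ "insert b C" G] by blast
  have bX: "b \<in> ?X" using generate.incl[of b "insert b C" G] by blast
  have XG: "?X \<subseteq> carrier G" using subgroup.subset[OF sX] .
  have finX: "finite ?X" using XG fin finite_subset by blast
  have L1: "card (rcosets ?X) * card ?X = order G" using lagrange[OF sX] .
  have L2: "card (rcosets C) * card C = order G" using lagrange[OF sC] .
  have sCX: "subgroup C (subgroup_generated G ?X)"
    using subgroup_subgroup_generated_iff sC CX subgroup.carrier_subgroup_generated_subgroup[OF sX] by simp
  interpret SX: group "subgroup_generated G ?X" by simp
  have L3: "card (rcosets\<^bsub>subgroup_generated G ?X\<^esub> C) * card C = card ?X"
    using SX.lagrange[OF sCX] subgroup.carrier_subgroup_generated_subgroup[OF sX] unfolding order_def by simp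
  have "finite C" using fin subgroup.subset[OF sC] finite_subset by blast
  moreover have "C \<noteq> {}" using subgroup.one_closed[OF sC] by blast
  ultimately have cC: "card C > 0" by (simp add: card_gt_0_iff)
  have "q = card (rcosets ?X) * card (rcosets\<^bsub>subgroup_generated G ?X\<^esub> C)"
  proof -
    have "q * card C = (card (rcosets ?X) * card (rcosets\<^bsub>subgroup_generated G ?X\<^esub> C)) * card C"
      using L1 L2 L3 q by (simp add: mult.assoc)
    then show ?thesis using cC by simp
  qed
  then have "card (rcosets ?X) = 1 \<or> card (rcosets\<^bsub>subgroup_generated G ?X\<^esub> C) = 1"
    using qp prime_product by blast
  then show ?thesis
  proof
    assume "card (rcosets ?X) = 1"
    then have "card ?X = card (carrier G)" using L1 unfolding order_def by simp
    then show ?thesis using XG fin card_subset_eq by blast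
  next
    assume "card (rcosets\<^bsub>subgroup_generated G ?X\<^esub> C) = 1"
    then have "card C = card ?X" using L3 by simp
    then have "C = ?X" using CX finX card_subset_eq by blast
    then show ?thesis using bX b by blast
  qed
qed

lemma conj_pow:
  assumes N: "P \<lhd> G" and comm: "\<And>x y. x \<in> P \<Longrightarrow> y \<in> P \<Longrightarrow> x \<otimes> y = y \<otimes> x"
    and a: "a \<in> P" and b: "b \<in> carrier G"
  shows "\<forall>x\<in>P. (a \<otimes> b) [^] (j::nat) \<otimes> x \<otimes> inv ((a \<otimes> b) [^] j) = b [^] j \<otimes> x \<otimes> inv (b [^] j)"
proof (induction j)
  case 0 then show ?case using N normal_imp_subgroup subgroup.subset by fastforce
next
  case (Suc j)
  have PG: "P \<subseteq> carrier G" using subgroup.subset[OF normal_imp_subgroup[OF N]] .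
  have aG: "a \<in> carrier G" using a PG by blast
  let ?h = "a \<otimes> b"
  have hG: "?h \<in> carrier G" using aG b by simp
  have one: "?h \<otimes> x \<otimes> inv ?h = b \<otimes> x \<otimes> inv b" if x: "x \<in> P" for x
  proof -
    have xG: "x \<in> carrier G" using x PG by blast
    have z: "b \<otimes> x \<otimes> inv b \<in> P" using normal.inv_op_closed2[OF N b x] .
    have zG: "b \<otimes> x \<otimes> inv b \<in> carrier G" using z PG by blast
    have "?h \<otimes> x \<otimes> inv ?h = a \<otimes> (b \<otimes> x \<otimes> inv b) \<otimes> inv a"
      using conj_mult[OF aG b xG] .
    also have "\<dots> = (b \<otimes> x \<otimes> inv b) \<otimes> a \<otimes> inv a" using comm[OF a z] by simp
    also have "\<dots> = b \<otimes> x \<otimes> inv b" using zG aG by (simp add: m_assoc)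
    finally show ?thesis .
  qed
  show ?case
  proof
    fix x assume x: "x \<in> P"
    have xG: "x \<in> carrier G" using x PG by blast
    have z: "b \<otimes> x \<otimes> inv b \<in> P" using normal.inv_op_closed2[OF N b x] .
    have zG: "b \<otimes> x \<otimes> inv b \<in> carrier G" using z PG by blast
    have "?h [^] Suc j \<otimes> x \<otimes> inv (?h [^] Suc j) = ?h [^] j \<otimes> (?h \<otimes> x \<otimes> inv ?h) \<otimes> inv (?h [^] j)"
      using conj_mult[of "?h [^] j" ?h x] hG xG by (simp add: nat_pow_Suc)
    also have "\<dots> = ?h [^] j \<otimes> (b \<otimes> x \<otimes> inv b) \<otimes> inv (?h [^] j)" using one[OF x] by simp
    also have "\<dots> = b [^] j \<otimes> (b \<otimes> x \<otimes> inv b) \<otimes> inv (b [^] j)" using Suc z by blast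
    also have "\<dots> = b [^] Suc j \<otimes> x \<otimes> inv (b [^] Suc j)"
      using conj_mult[of "b [^] j" b x] b xG by (simp add: nat_pow_Suc)
    finally show "?h [^] Suc j \<otimes> x \<otimes> inv (?h [^] Suc j) = b [^] Suc j \<otimes> x \<otimes> inv (b [^] Suc j)" .
  qed
qed

end



context group begin

lemma conj_mult_distrib:
  "g \<in> carrier G \<Longrightarrow> x \<in> carrier G \<Longrightarrow> y \<in> carrier G \<Longrightarrow>
   g \<otimes> (x \<otimes> y) \<otimes> inv g = (g \<otimes> x \<otimes> inv g) \<otimes> (g \<otimes> y \<otimes> inv g)"
  by (simp add: m_assoc)

lemma conj_pow_distrib:
  assumes g: "g \<in> carrier G" and y: "y \<in> carrier G"
  shows "g \<otimes> y [^] (n::nat) \<otimes> inv g = (g \<otimes> y \<otimes> inv g) [^] n"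
proof (induction n)
  case 0 show ?case using g by simp
next
  case (Suc n)
  have "g \<otimes> y [^] Suc n \<otimes> inv g = g \<otimes> (y [^] n \<otimes> y) \<otimes> inv g" by (simp only: nat_pow_Suc)
  also have "\<dots> = (g \<otimes> y [^] n \<otimes> inv g) \<otimes> (g \<otimes> y \<otimes> inv g)"
    using conj_mult_distrib[OF g nat_pow_closed[OF y] y] .
  also have "\<dots> = (g \<otimes> y \<otimes> inv g) [^] n \<otimes> (g \<otimes> y \<otimes> inv g)" using Suc by simp
  also have "\<dots> = (g \<otimes> y \<otimes> inv g) [^] Suc n" by (simp only: nat_pow_Suc)
  finally show ?case .
qed

lemma decomp:
  assumes "P <#> Q = carrier G" "g \<in> carrier G"
  shows "\<exists>a\<in>P. \<exists>b\<in>Q. g = a \<otimes> b"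
  using assms unfolding set_mult_def by blast

lemma Q_in:
  assumes fin: "finite (carrier G)" and sQ: "subgroup Q G" and cyc: "cyclic_group (subgroup_generated G Q)"
    and cQ: "card Q = q ^ k" and qp: "Factorial_Ring.prime q"
    and sC: "subgroup C G" and bQ: "b \<in> Q" and bC: "b \<notin> C"
    and dec: "\<And>g. g \<in> carrier G \<Longrightarrow> \<exists>j c. c \<in> C \<and> g = b [^] (j::nat) \<otimes> c"
  shows "\<forall>g\<in>Q. \<exists>e::nat. g = b [^] e"
proof -
  have QG: "Q \<subseteq> carrier G" using subgroup.subset[OF sQ] .
  have CG: "C \<subseteq> carrier G" using subgroup.subset[OF sC] .
  have bG: "b \<in> carrier G" using bQ QG by blast
  interpret SQ: group "subgroup_generated G Q" by simp
  have cSQ: "carrier (subgroup_generated G Q) = Q" using subgroup.carrier_subgroup_generated_subgroup[OF sQ] .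
  obtain x where x: "x \<in> Q" "Q = range (\<lambda>n::int. x [^]\<^bsub>subgroup_generated G Q\<^esub> n)"
    using SQ.cyclic_group[THEN iffD1, OF cyc] cSQ by auto
  have xG: "x \<in> carrier G" using x(1) QG by blast
  have "Q = range (\<lambda>n::int. x [^] n)"
  proof -
    have "\<And>n::int. x [^]\<^bsub>subgroup_generated G Q\<^esub> n = x [^] n"
      using int_pow_subgroup_generated[of x Q] x(1) cSQ by simp
    then show ?thesis using x(2) by simp
  qed
  then have Qgen: "Q = generate G {x}" using generate_pow[OF xG] by auto
  then have Qx: "Q = {x [^] t | t::nat. t \<in> UNIV}" using generate_pow_on_finite_carrier[OF fin xG] by simp
  have ox: "ord x = q ^ k" using generate_pow_card[OF xG] Qgen cQ by simp
  obtain i :: nat where i: "b = x [^] i" using bQ Qx by blast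
  obtain j c where jc: "c \<in> C" "x = b [^] (j::nat) \<otimes> c" using dec[OF xG] by blast
  have cG: "c \<in> carrier G" using jc(1) CG by blast
  have "c = inv (b [^] j) \<otimes> x" using jc(2) cG bG by simp
  moreover have "inv (b [^] j) \<otimes> x \<in> Q"
    using subgroup.m_closed[OF sQ subgroup.m_inv_closed[OF sQ sub_pow_closed[OF sQ bQ]] x(1)] .
  ultimately have cQ': "c \<in> Q" by simp
  obtain l :: nat where l: "c = x [^] l" using cQ' Qx by blast
  have eq: "x [^] (i * j + l) = x [^] (1::nat)"
  proof -
    have "x [^] (i * j + l) = (x [^] i) [^] j \<otimes> x [^] l" using xG by (simp add: nat_pow_mult nat_pow_pow)
    also have "\<dots> = x" using jc(2) i l by simp
    finally show ?thesis using xG by simp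
  qed
  show ?thesis
  proof (cases "q dvd i")
    case False
    obtain e' where e': "(x [^] i) [^] (e'::nat) = x" using gen_pow[OF xG ox qp False] by blast
    show ?thesis
    proof
      fix g assume "g \<in> Q"
      then obtain t :: nat where "g = x [^] t" using Qx by blast
      moreover have "b [^] e' = x" using e' i by simp
      moreover have "(b [^] e') [^] t = b [^] (e' * t)" using bG by (simp add: nat_pow_pow)
      ultimately have "g = b [^] (e' * t)" by simp
      then show "\<exists>e::nat. g = b [^] e" by blast
    qed
  next
    case qi: True
    show ?thesis
    proof (cases "q dvd l")
      case False
      obtain e' where e': "(x [^] l) [^] (e'::nat) = x" using gen_pow[OF xG ox qp False] by blast
      then have "x \<in> C" using sub_pow_closed[OF sC jc(1), of e'] l by simp
      then have "b \<in> C" using i sub_pow_closed[OF sC] by simp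
      then show ?thesis using bC by blast
    next
      case ql: True
      have k0: "k \<noteq> 0"
      proof
        assume "k = 0"
        then have "ord x = 1" using ox by simp
        then have "x = \<one>" using ord_eq_1[OF xG] by simp
        then have "b = \<one>" using i by simp
        then show False using bC subgroup.one_closed[OF sC] by simp
      qed
      have "x [^] int (i * j + l) = x [^] int (1::nat)" unfolding int_pow_int by (rule eq)
      then have "int (ord x) dvd int 1 - int (i * j + l)" using int_pow_eq[OF xG] by blast
      then have "int (q ^ k) dvd int 1 - int (i * j + l)" using ox by simp
      moreover have "int q dvd int (q ^ k)" using k0 by (simp add: dvd_power)
      ultimately have d1: "int q dvd int 1 - int (i * j + l)" using dvd_trans by blast
      have "q dvd i * j + l" using qi ql by simp
      then have d2: "int q dvd int (i * j + l)" by (simp only: int_dvd_int_iff)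
      have "int q dvd (int 1 - int (i * j + l)) + int (i * j + l)" using d1 d2 by (rule dvd_add)
      then have "int q dvd 1" by simp
      then have "q dvd 1" by simp
      then show ?thesis using qp by simp
    qed
  qed
qed

end



context group begin

lemma key_claim:
  assumes fin: "finite (carrier G)" and N: "P \<lhd> G"
    and comm: "\<And>x y. x \<in> P \<Longrightarrow> y \<in> P \<Longrightarrow> x \<otimes> y = y \<otimes> x"
    and sQ: "subgroup Q G" and cyc: "cyclic_group (subgroup_generated G Q)"
    and cQ: "card Q = q ^ k" and qp: "Factorial_Ring.prime q" and PQ: "P <#> Q = carrier G"
    and idx: "card (rcosets (centralizer G P)) = q"
    and irr: "acts_irreducibly_mod_power G Q P p"
    and expP: "\<And>y. y \<in> P \<Longrightarrow> y [^] (p ^ m) = \<one>"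
    and Cab: "\<And>c1 c2. c1 \<in> centralizer G P \<Longrightarrow> c2 \<in> centralizer G P \<Longrightarrow> c1 \<otimes> c2 = c2 \<otimes> c1"
    and sH: "subgroup H G" and Hne: "H \<noteq> carrier G" and nab: "\<not> comm_group (subgroup_generated G H)"
  shows "H \<inter> P \<subseteq> power_subgroup G P p"
proof -
  let ?C = "centralizer G P"
  let ?PS = "power_subgroup G P p"
  let ?D = "H \<inter> P"
  have sP: "subgroup P G" using normal_imp_subgroup[OF N] .
  have PG: "P \<subseteq> carrier G" using subgroup.subset[OF sP] .
  have HG: "H \<subseteq> carrier G" using subgroup.subset[OF sH] .
  have QG: "Q \<subseteq> carrier G" using subgroup.subset[OF sQ] .
  have sC: "subgroup ?C G" using cent_sub[OF PG] .
  have CG: "?C \<subseteq> carrier G" using subgroup.subset[OF sC] .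
  have PC: "P \<subseteq> ?C" using P_sub_cent[OF PG comm] .
  have cH: "carrier (subgroup_generated G H) = H" using subgroup.carrier_subgroup_generated_subgroup[OF sH] .
  obtain h where hH: "h \<in> H" and hC: "h \<notin> ?C"
  proof -
    have "\<not> (\<forall>u\<in>H. \<forall>v\<in>H. u \<otimes> v = v \<otimes> u)"
    proof
      assume a: "\<forall>u\<in>H. \<forall>v\<in>H. u \<otimes> v = v \<otimes> u"
      interpret SH: group "subgroup_generated G H" by simp
      have "comm_group (subgroup_generated G H)"
        by (rule SH.group_comm_groupI) (use a cH in simp)
      then show False using nab by blast
    qed
    then obtain u v where uv: "u \<in> H" "v \<in> H" "u \<otimes> v \<noteq> v \<otimes> u" by blast
    then have "u \<notin> ?C \<or> v \<notin> ?C" using Cab by blast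
    then show ?thesis using that uv by blast
  qed
  have hG: "h \<in> carrier G" using hH HG by blast
  obtain a b where ab: "a \<in> P" "b \<in> Q" "h = a \<otimes> b" using decomp[OF PQ hG] by blast
  have aG: "a \<in> carrier G" using ab(1) PG by blast
  have bG: "b \<in> carrier G" using ab(2) QG by blast
  have bC: "b \<notin> ?C"
  proof
    assume "b \<in> ?C"
    then have "a \<otimes> b \<in> ?C" using subgroup.m_closed[OF sC] ab(1) PC by blast
    then show False using hC ab(3) by simp
  qed
  have gen: "generate G (insert b ?C) = carrier G"
    using index_prime_gen[OF fin sC idx qp bG bC] .
  have dec: "\<exists>j c. c \<in> ?C \<and> g = b [^] (j::nat) \<otimes> c" if "g \<in> carrier G" for g
    using gen_decomp[OF N fin bG, of g] that gen by simp
  have conjh: "\<exists>j::nat. \<forall>x\<in>P. g \<otimes> x \<otimes> inv g = h [^] j \<otimes> x \<otimes> inv (h [^] j)" if g: "g \<in> carrier G" for g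
  proof -
    obtain j c where jc: "c \<in> ?C" "g = b [^] (j::nat) \<otimes> c" using dec[OF g] by blast
    have cG: "c \<in> carrier G" using jc(1) CG by blast
    have "g \<otimes> x \<otimes> inv g = h [^] j \<otimes> x \<otimes> inv (h [^] j)" if x: "x \<in> P" for x
    proof -
      have xG: "x \<in> carrier G" using x PG by blast
      have cx: "c \<otimes> x = x \<otimes> c" using jc(1) x unfolding centralizer_def by blast
      have cxc: "c \<otimes> x \<otimes> inv c = x" using cx cG xG by (simp add: m_assoc)
      have "g \<otimes> x \<otimes> inv g = b [^] j \<otimes> (c \<otimes> x \<otimes> inv c) \<otimes> inv (b [^] j)"
        using conj_mult[OF nat_pow_closed[OF bG] cG xG] jc(2) by simp
      also have "\<dots> = b [^] j \<otimes> x \<otimes> inv (b [^] j)" using cxc by simp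
      also have "\<dots> = h [^] j \<otimes> x \<otimes> inv (h [^] j)"
        using conj_pow[OF N comm ab(1) bG, of j] x ab(3) by simp
      finally show ?thesis .
    qed
    then show ?thesis by blast
  qed
  have Dinv: "g \<otimes> d \<otimes> inv g \<in> ?D" if g: "g \<in> carrier G" and d: "d \<in> ?D" for g d
  proof -
    obtain j :: nat where j: "\<forall>x\<in>P. g \<otimes> x \<otimes> inv g = h [^] j \<otimes> x \<otimes> inv (h [^] j)" using conjh[OF g] by blast
    have dP: "d \<in> P" and dH: "d \<in> H" using d by auto
    have hj: "h [^] j \<in> H" using sub_pow_closed[OF sH hH] .
    have "h [^] j \<otimes> d \<otimes> inv (h [^] j) \<in> H"
      using subgroup.m_closed[OF sH subgroup.m_closed[OF sH hj dH] subgroup.m_inv_closed[OF sH hj]] .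
    moreover have "g \<otimes> d \<otimes> inv g \<in> P" using normal.inv_op_closed2[OF N g dP] .
    ultimately show ?thesis using j dP by simp
  qed
  define K where "K = {d \<otimes> y [^] p | d y. d \<in> ?D \<and> y \<in> P}"
  have oneD: "\<one> \<in> ?D" using subgroup.one_closed[OF sH] subgroup.one_closed[OF sP] by blast
  have DmC: "d1 \<otimes> d2 \<in> ?D" if "d1 \<in> ?D" "d2 \<in> ?D" for d1 d2
    using subgroup.m_closed[OF sH, of d1 d2] subgroup.m_closed[OF sP, of d1 d2] that by blast
  have DiC: "inv d \<in> ?D" if "d \<in> ?D" for d
    using subgroup.m_inv_closed[OF sH, of d] subgroup.m_inv_closed[OF sP, of d] that by blast
  have DpC: "d [^] (n::nat) \<in> ?D" if "d \<in> ?D" for d n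
    using sub_pow_closed[OF sH, of d n] sub_pow_closed[OF sP, of d n] that by blast
  have ypP: "y [^] (n::nat) \<in> P" if "y \<in> P" for y n using sub_pow_closed[OF sP that] .
  have KP: "K \<subseteq> P"
  proof
    fix z assume "z \<in> K"
    then obtain d y where dy: "z = d \<otimes> y [^] p" "d \<in> ?D" "y \<in> P" unfolding K_def by blast
    show "z \<in> P" using subgroup.m_closed[OF sP _ ypP[OF dy(3)], of d] dy by blast
  qed
  have sK: "subgroup K G"
  proof (rule subgroupI)
    show "K \<subseteq> carrier G" using KP PG by blast
    have "\<one> = \<one> \<otimes> \<one> [^] p" by simp
    then have "\<one> \<in> K" unfolding K_def using oneD subgroup.one_closed[OF sP] by blast
    then show "K \<noteq> {}" by blast
  next
    fix z assume "z \<in> K"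
    then obtain d y where dy: "z = d \<otimes> y [^] p" "d \<in> ?D" "y \<in> P" unfolding K_def by blast
    have dG: "d \<in> carrier G" using dy(2) PG by blast
    have yG: "y \<in> carrier G" using dy(3) PG by blast
    have "inv z = inv (y [^] p) \<otimes> inv d" using dy(1) dG yG by (simp add: inv_mult_group)
    also have "\<dots> = inv d \<otimes> inv (y [^] p)"
      using comm[OF subgroup.m_inv_closed[OF sP ypP[OF dy(3)]] subgroup.m_inv_closed[OF sP, of d]] dy(2) by blast
    also have "\<dots> = inv d \<otimes> (inv y) [^] p" using yG by (simp add: nat_pow_inv)
    finally have "inv z = inv d \<otimes> (inv y) [^] p" .
    moreover have "inv d \<in> ?D" using DiC dy(2) .
    moreover have "inv y \<in> P" using subgroup.m_inv_closed[OF sP dy(3)] .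
    ultimately show "inv z \<in> K" unfolding K_def by blast
  next
    fix z1 z2 assume "z1 \<in> K" "z2 \<in> K"
    then obtain d1 y1 d2 y2 where dy: "z1 = d1 \<otimes> y1 [^] p" "d1 \<in> ?D" "y1 \<in> P"
      "z2 = d2 \<otimes> y2 [^] p" "d2 \<in> ?D" "y2 \<in> P" unfolding K_def by blast
    have G: "d1 \<in> carrier G" "y1 \<in> carrier G" "d2 \<in> carrier G" "y2 \<in> carrier G"
      using dy PG by blast+
    have c1: "y1 [^] p \<otimes> d2 = d2 \<otimes> y1 [^] p" using comm[OF ypP[OF dy(3)], of d2] dy(5) by blast
    have c2: "y1 \<otimes> y2 = y2 \<otimes> y1" using comm[OF dy(3) dy(6)] .
    have "z1 \<otimes> z2 = d1 \<otimes> (y1 [^] p \<otimes> d2) \<otimes> y2 [^] p" using dy(1,4) G by (simp add: m_assoc)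
    also have "\<dots> = d1 \<otimes> (d2 \<otimes> y1 [^] p) \<otimes> y2 [^] p" using c1 by simp
    also have "\<dots> = (d1 \<otimes> d2) \<otimes> (y1 [^] p \<otimes> y2 [^] p)" using G by (simp add: m_assoc)
    also have "\<dots> = (d1 \<otimes> d2) \<otimes> (y1 \<otimes> y2) [^] p" using pow_mult_distrib[OF c2 G(2) G(4)] by simp
    finally have "z1 \<otimes> z2 = (d1 \<otimes> d2) \<otimes> (y1 \<otimes> y2) [^] p" .
    moreover have "d1 \<otimes> d2 \<in> ?D" using DmC dy(2,5) .
    moreover have "y1 \<otimes> y2 \<in> P" using subgroup.m_closed[OF sP dy(3) dy(6)] .
    ultimately show "z1 \<otimes> z2 \<in> K" unfolding K_def by blast
  qed
  have PSK: "?PS \<subseteq> K"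
  proof
    fix z assume "z \<in> ?PS"
    then obtain y where y: "y \<in> P" "z = y [^] p" using PS_pow[OF sP comm] by blast
    have "z = \<one> \<otimes> y [^] p" using y PG by auto
    then show "z \<in> K" unfolding K_def using oneD y(1) by blast
  qed
  have Kinv: "conj_invariant G Q K"
    unfolding conj_invariant_def
  proof (intro ballI)
    fix g z assume g: "g \<in> Q" and z: "z \<in> K"
    have gG: "g \<in> carrier G" using g QG by blast
    obtain d y where dy: "z = d \<otimes> y [^] p" "d \<in> ?D" "y \<in> P" using z unfolding K_def by blast
    have dG: "d \<in> carrier G" using dy(2) PG by blast
    have yG: "y \<in> carrier G" using dy(3) PG by blast
    have "g \<otimes> z \<otimes> inv g = (g \<otimes> d \<otimes> inv g) \<otimes> (g \<otimes> y [^] p \<otimes> inv g)"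
      using conj_mult_distrib[OF gG dG nat_pow_closed[OF yG]] dy(1) by simp
    also have "\<dots> = (g \<otimes> d \<otimes> inv g) \<otimes> (g \<otimes> y \<otimes> inv g) [^] p"
      using conj_pow_distrib[OF gG yG] by simp
    finally have e: "g \<otimes> z \<otimes> inv g = (g \<otimes> d \<otimes> inv g) \<otimes> (g \<otimes> y \<otimes> inv g) [^] p" .
    have "g \<otimes> d \<otimes> inv g \<in> ?D" using Dinv[OF gG dy(2)] .
    moreover have "g \<otimes> y \<otimes> inv g \<in> P" using normal.inv_op_closed2[OF N gG dy(3)] .
    ultimately show "g \<otimes> z \<otimes> inv g \<in> K" unfolding K_def using e by blast
  qed
  have "K = ?PS \<or> K = P" using irr sK PSK KP Kinv unfolding acts_irreducibly_mod_power_def by blast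
  then show ?thesis
  proof
    assume "K = ?PS"
    have "?D \<subseteq> K"
    proof
      fix d assume d: "d \<in> ?D"
      have "d = d \<otimes> \<one> [^] p" using d PG by auto
      then show "d \<in> K" unfolding K_def using d subgroup.one_closed[OF sP] by blast
    qed
    then show ?thesis using \<open>K = ?PS\<close> by simp
  next
    assume KeqP: "K = P"
    have frat: "\<forall>x\<in>P. \<exists>d\<in>?D. \<exists>y\<in>P. x = d \<otimes> y [^] (p ^ n)" for n
    proof (induction n)
      case 0
      show ?case
      proof
        fix x assume x: "x \<in> P"
        have "x = \<one> \<otimes> x [^] (p ^ 0)" using x PG by auto
        then show "\<exists>d\<in>?D. \<exists>y\<in>P. x = d \<otimes> y [^] (p ^ 0)" using oneD x by blast
      qed
    next
      case (Suc n)
      show ?case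
      proof
        fix x assume x: "x \<in> P"
        obtain d y where dy: "d \<in> ?D" "y \<in> P" "x = d \<otimes> y [^] (p ^ n)" using Suc x by blast
        have "y \<in> K" using KeqP dy(2) by simp
        then obtain d' w where dw: "y = d' \<otimes> w [^] p" "d' \<in> ?D" "w \<in> P" unfolding K_def by blast
        have G: "d \<in> carrier G" "d' \<in> carrier G" "w \<in> carrier G" using dy dw PG by blast+
        have cm: "d' \<otimes> w [^] p = w [^] p \<otimes> d'" using comm[of d' "w [^] p"] dw(2) ypP[OF dw(3)] by blast
        have "y [^] (p ^ n) = d' [^] (p ^ n) \<otimes> (w [^] p) [^] (p ^ n)"
          using pow_mult_distrib[OF cm G(2) nat_pow_closed[OF G(3)]] dw(1) by simp
        also have "(w [^] p) [^] (p ^ n) = w [^] (p ^ Suc n)" using G(3) by (simp add: nat_pow_pow)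
        finally have "y [^] (p ^ n) = d' [^] (p ^ n) \<otimes> w [^] (p ^ Suc n)" .
        then have "x = (d \<otimes> d' [^] (p ^ n)) \<otimes> w [^] (p ^ Suc n)" using dy(3) G by (simp add: m_assoc)
        moreover have "d \<otimes> d' [^] (p ^ n) \<in> ?D" using DmC[OF dy(1) DpC[OF dw(2)]] .
        ultimately show "\<exists>d\<in>?D. \<exists>y\<in>P. x = d \<otimes> y [^] (p ^ Suc n)" using dw(3) by blast
      qed
    qed
    have PD: "P \<subseteq> ?D"
    proof
      fix x assume x: "x \<in> P"
      obtain d y where dy: "d \<in> ?D" "y \<in> P" "x = d \<otimes> y [^] (p ^ m)" using frat[of m] x by blast
      have "x = d" using dy expP[OF dy(2)] PG by auto
      then show "x \<in> ?D" using dy(1) by simp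
    qed
    have aH: "a \<in> H" using PD ab(1) by blast
    have "b = inv a \<otimes> h" using ab(3) aG bG by simp
    then have bH: "b \<in> H" using subgroup.m_closed[OF sH subgroup.m_inv_closed[OF sH aH] hH] by simp
    have Qb: "\<forall>g\<in>Q. \<exists>e::nat. g = b [^] e"
      using Q_in[OF fin sQ cyc cQ qp sC ab(2) bC dec] by blast
    have QH: "Q \<subseteq> H"
    proof
      fix g assume "g \<in> Q"
      then obtain e :: nat where "g = b [^] e" using Qb by blast
      then show "g \<in> H" using sub_pow_closed[OF sH bH] by simp
    qed
    have "carrier G \<subseteq> H"
    proof
      fix g assume "g \<in> carrier G"
      then obtain a' b' where "a' \<in> P" "b' \<in> Q" "g = a' \<otimes> b'" using decomp[OF PQ] by blast
      then show "g \<in> H" using subgroup.m_closed[OF sH, of a' b'] PD QH by blast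
    qed
    then show ?thesis using HG Hne by blast
  qed
qed

end



theorem mainTheorem8:
  fixes G (structure) and P Q :: "'a set" and p q m :: nat
  assumes "group G" and "finite (carrier G)"
    and "Factorial_Ring.prime p" and "Factorial_Ring.prime q" and "p \<noteq> q"
    and "\<not> comm_group G"
    and "P \<lhd> G"
    and "card P = p ^ multiplicity p (order G)"
    and "comm_group (subgroup_generated G P)"
    and "subgroup Q G"
    and "cyclic_group (subgroup_generated G Q)"
    and "\<exists>k. card Q = q ^ k"
    and "P \<inter> Q = {\<one>}"
    and "P <#> Q = carrier G"
    and "m > 0"
    and "homocyclic G P p m"
    and "card (rcosets (centralizer G P)) = q"
    and "acts_nontrivially_mod_power G Q P p"
    and "acts_irreducibly_mod_power G Q P p"
  shows "exponent_critical G"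
proof -
  interpret group G by fact
  note fin = assms(2) and pp = assms(3) and qp = assms(4) and pq = assms(5) and N = assms(7)
    and cP = assms(9) and sQ = assms(10) and cyc = assms(11) and PQ = assms(14) and m0 = assms(15)
    and hc = assms(16) and idx = assms(17) and irr = assms(19)
  obtain k where cQ: "card Q = q ^ k" using assms(12) by blast
  let ?C = "centralizer G P"
  let ?PS = "power_subgroup G P p"
  have sP: "subgroup P G" using normal_imp_subgroup[OF N] .
  have PG: "P \<subseteq> carrier G" using subgroup.subset[OF sP] .
  have QG: "Q \<subseteq> carrier G" using subgroup.subset[OF sQ] .
  have comm: "x \<otimes> y = y \<otimes> x" if "x \<in> P" "y \<in> P" for x y
  proof -
    have c: "carrier (subgroup_generated G P) = P" using subgroup.carrier_subgroup_generated_subgroup[OF sP] .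
    interpret CP: comm_group "subgroup_generated G P" by (rule cP)
    show ?thesis using CP.m_comm[of x y] that c by simp
  qed
  have Qcomm: "x \<otimes> y = y \<otimes> x" if "x \<in> Q" "y \<in> Q" for x y
  proof -
    have c: "carrier (subgroup_generated G Q) = Q" using subgroup.carrier_subgroup_generated_subgroup[OF sQ] .
    have "comm_group (subgroup_generated G Q)"
      using group.cyclic_imp_abelian_group[OF group_subgroup_generated cyc] .
    then interpret CQ: comm_group "subgroup_generated G Q" .
    show ?thesis using CQ.m_comm[of x y] that c by simp
  qed
  have ne: "?PS \<noteq> P" using irr unfolding acts_irreducibly_mod_power_def by blast
  have hf: "(\<forall>y\<in>P. y [^] (p^m) = \<one>) \<and> (\<exists>x\<in>P. x [^] (p^(m-1)) \<noteq> \<one>)"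
    using homocyclic_facts[OF assms(1) sP hc pp m0 comm ne] by blast
  then have expP: "\<And>y. y \<in> P \<Longrightarrow> y [^] (p^m) = \<one>" by blast
  obtain x0 where x0: "x0 \<in> P" "x0 [^] (p^(m-1)) \<noteq> \<one>" using hf by blast
  have sC: "subgroup ?C G" using cent_sub[OF PG] .
  have CG: "?C \<subseteq> carrier G" using subgroup.subset[OF sC] .
  have PC: "P \<subseteq> ?C" using P_sub_cent[OF PG comm] .
  have Cdec: "\<exists>a\<in>P. \<exists>z\<in>Q \<inter> ?C. c = a \<otimes> z" if c: "c \<in> ?C" for c
  proof -
    have cG: "c \<in> carrier G" using c CG by blast
    obtain a z where az: "a \<in> P" "z \<in> Q" "c = a \<otimes> z" using decomp[OF PQ cG] by blast
    have aG: "a \<in> carrier G" using az(1) PG by blast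
    have zG: "z \<in> carrier G" using az(2) QG by blast
    have "z = inv a \<otimes> c" using az(3) aG zG by simp
    moreover have "inv a \<otimes> c \<in> ?C" using subgroup.m_closed[OF sC subgroup.m_inv_closed[OF sC] c] az(1) PC by blast
    ultimately have "z \<in> ?C" by simp
    then show ?thesis using az by blast
  qed
  have Cab: "c1 \<otimes> c2 = c2 \<otimes> c1" if c: "c1 \<in> ?C" "c2 \<in> ?C" for c1 c2
  proof -
    obtain a1 z1 where 1: "a1 \<in> P" "z1 \<in> Q" "z1 \<in> ?C" "c1 = a1 \<otimes> z1" using Cdec[OF c(1)] by blast
    obtain a2 z2 where 2: "a2 \<in> P" "z2 \<in> Q" "z2 \<in> ?C" "c2 = a2 \<otimes> z2" using Cdec[OF c(2)] by blast
    have G: "a1 \<in> carrier G" "z1 \<in> carrier G" "a2 \<in> carrier G" "z2 \<in> carrier G"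
      using 1 2 PG QG by blast+
    have z1a2: "z1 \<otimes> a2 = a2 \<otimes> z1" using 1(3) 2(1) unfolding centralizer_def by blast
    have z2a1: "z2 \<otimes> a1 = a1 \<otimes> z2" using 2(3) 1(1) unfolding centralizer_def by blast
    have "c1 \<otimes> c2 = a1 \<otimes> (z1 \<otimes> a2) \<otimes> z2" using 1(4) 2(4) G by (simp add: m_assoc)
    also have "\<dots> = (a1 \<otimes> a2) \<otimes> (z1 \<otimes> z2)" using z1a2 G by (simp add: m_assoc)
    also have "\<dots> = (a2 \<otimes> a1) \<otimes> (z2 \<otimes> z1)" using comm[OF 1(1) 2(1)] Qcomm[OF 1(2) 2(2)] by simp
    also have "\<dots> = a2 \<otimes> (z2 \<otimes> a1) \<otimes> z1" using z2a1 G by (simp add: m_assoc)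
    also have "\<dots> = c2 \<otimes> c1" using 1(4) 2(4) G by (simp add: m_assoc)
    finally show ?thesis .
  qed
  define M where "M = p ^ (m - 1) * card Q"
  have subexp: "group_exponent (subgroup_generated G H) dvd M"
    if sH: "subgroup H G" and Hne: "H \<noteq> carrier G" and nab: "\<not> comm_group (subgroup_generated G H)" for H
  proof -
    have DPS: "H \<inter> P \<subseteq> ?PS"
      using key_claim[OF fin N comm sQ cyc cQ qp PQ idx irr expP Cab sH Hne nab] by blast
    have cH: "carrier (subgroup_generated G H) = H" using subgroup.carrier_subgroup_generated_subgroup[OF sH] .
    interpret SH: group "subgroup_generated G H" by simp
    interpret SQ: group "subgroup_generated G Q" by simp
    have cQs: "carrier (subgroup_generated G Q) = Q" using subgroup.carrier_subgroup_generated_subgroup[OF sQ] .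
    have yM: "y [^] M = \<one>" if y: "y \<in> H" for y
    proof -
      have yG: "y \<in> carrier G" using y subgroup.subset[OF sH] by blast
      obtain a b where ab: "a \<in> P" "b \<in> Q" "y = a \<otimes> b" using decomp[OF PQ yG] by blast
      have bG: "b \<in> carrier G" using ab(2) QG by blast
      obtain a' where a': "a' \<in> P" "(a \<otimes> b) [^] card Q = a' \<otimes> b [^] card Q"
        using pow_coset[OF N ab(1) bG] by blast
      have "b [^]\<^bsub>subgroup_generated G Q\<^esub> order (subgroup_generated G Q) = \<one>\<^bsub>subgroup_generated G Q\<^esub>"
        using SQ.pow_order_eq_1[of b] ab(2) cQs by simp
      then have bQ1: "b [^] card Q = \<one>" using cQs unfolding order_def by (simp add: pow_subgroup_generated)
      have a'G: "a' \<in> carrier G" using a'(1) PG by blast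
      have ya': "y [^] card Q = a'" using a'(2) ab(3) bQ1 a'G by simp
      have "y [^] card Q \<in> H" using sub_pow_closed[OF sH y] .
      then have "a' \<in> ?PS" using ya' a'(1) DPS by blast
      then obtain w where w: "w \<in> P" "a' = w [^] p" using PS_pow[OF sP comm] by blast
      have wG: "w \<in> carrier G" using w(1) PG by blast
      have pm: "p * p ^ (m - 1) = p ^ m" using m0 by (cases m) auto
      have "y [^] M = (y [^] card Q) [^] (p ^ (m - 1))" using yG unfolding M_def by (simp add: nat_pow_pow mult.commute)
      also have "\<dots> = (w [^] p) [^] (p ^ (m - 1))" using ya' w(2) by simp
      also have "\<dots> = w [^] (p ^ m)" using wG pm by (simp add: nat_pow_pow)
      also have "\<dots> = \<one>" using expP[OF w(1)] .
      finally show ?thesis .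
    qed
    have "group.ord (subgroup_generated G H) y dvd M" if y: "y \<in> H" for y
    proof -
      have "y [^]\<^bsub>subgroup_generated G H\<^esub> M = \<one>\<^bsub>subgroup_generated G H\<^esub>"
        using yM[OF y] by (simp add: pow_subgroup_generated)
      then show ?thesis using SH.pow_eq_id[of y M] y cH by simp
    qed
    then show ?thesis unfolding group_exponent_def using cH by (auto intro!: Lcm_least)
  qed
  let ?S = "{group_exponent (subgroup_generated G H) | H.
            subgroup H G \<and> H \<noteq> carrier G \<and> \<not> comm_group (subgroup_generated G H)}"
  have LS: "Lcm ?S dvd M" using subexp by (auto intro!: Lcm_least)
  show ?thesis
    unfolding exponent_critical_def
  proof
    assume eq: "group_exponent G = Lcm ?S"
    have x0G: "x0 \<in> carrier G" using x0(1) PG by blast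
    have "ord x0 dvd group_exponent G" unfolding group_exponent_def using x0G by (simp add: dvd_Lcm)
    then have o1: "ord x0 dvd M" using eq LS dvd_trans by metis
    have o2: "ord x0 dvd p ^ m" using expP[OF x0(1)] pow_eq_id[OF x0G] by simp
    have "coprime p q" using primes_coprime[OF pp qp pq] .
    then have "coprime (p ^ m) (card Q)" using cQ by simp
    then have "coprime (ord x0) (card Q)" using coprime_divisors[OF o2 dvd_refl] by blast
    then have "ord x0 dvd p ^ (m - 1)" using o1 unfolding M_def by (simp add: coprime_dvd_mult_left_iff)
    then have "x0 [^] (p ^ (m - 1)) = \<one>" using pow_eq_id[OF x0G] by simp
    then show False using x0(2) by simp
  qed
qed


end
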